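(* Let $\alpha,\beta,\gamma,\delta\ge0$ with $\alpha+\beta+\gamma+\delta=1$, $\beta>0$, $\delta>0$, $\alpha+\gamma>0$. Put $\xi:=\alpha+\beta$, $D:=4\beta\delta+(2\xi-1)^2$, $\mu:=\frac{1-\sqrt D}{2}$. Then $$h(\mu)\ \ge\ h(\xi)-(\beta+\delta)\,h\Bigl(\frac{\beta}{\beta+\delta}\Bigr).$$
   Context: $h(t)=-t\log t-(1-t)\log(1-t)$ is the binary entropy function on $[0,1]$. *)

theory Defs
  imports Complex_Main
begin

definition h :: "real \<Rightarrow> real" where
  "h t = (if t = 0 then 0 else - t * ln t) + (if t = 1 then 0 else - (1 - t) * ln (1 - t))"

end

theory Submission
  imports Defs
begin

lemma xlnx_lim: "((\<lambda>x::real. x * ln x) \<longlongrightarrow> 0) (at_right 0)"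
proof -
  have "((\<lambda>y::real. - (ln y / y)) \<longlongrightarrow> 0) at_top"
    using tendsto_minus[OF ln_x_over_x_tendsto_0] by simp
  moreover have "eventually (\<lambda>y::real. - (ln y / y) = inverse y * ln (inverse y)) at_top"
    using eventually_gt_at_top[of 0] by eventually_elim (simp add: ln_inverse divide_inverse)
  ultimately have "((\<lambda>y::real. inverse y * ln (inverse y)) \<longlongrightarrow> 0) at_top"
    by (rule Lim_transform_eventually)
  thus ?thesis by (subst filterlim_at_right_to_top) assumption
qed

lemma lim1: "((\<lambda>t::real. t^2 * ln t - (1-t)^2 * ln (1-t)) \<longlongrightarrow> 0) (at_right 0)"
proof -
  have a: "((\<lambda>t::real. t * (t * ln t)) \<longlongrightarrow> 0 * 0) (at_right 0)"
    by (intro tendsto_mult xlnx_lim) (simp add: tendsto_ident_at)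
  have "((\<lambda>t::real. (1-t)^2 * ln (1-t)) \<longlongrightarrow> (1-0)^2 * ln (1-0)) (at_right 0)"
    by (intro tendsto_intros) auto
  hence b: "((\<lambda>t::real. (1-t)^2 * ln (1-t)) \<longlongrightarrow> 0) (at_right 0)" by simp
  show ?thesis using tendsto_diff[OF a b] by (simp add: power2_eq_square mult.assoc)
qed

lemma lim2: "((\<lambda>t::real. (1-t) * ln (1-t) - t * ln t) \<longlongrightarrow> 0) (at_right 0)"
proof -
  have "((\<lambda>t::real. (1-t) * ln (1-t)) \<longlongrightarrow> (1-0) * ln (1-0)) (at_right 0)"
    by (intro tendsto_intros) auto
  hence b: "((\<lambda>t::real. (1-t) * ln (1-t)) \<longlongrightarrow> 0) (at_right 0)" by simp
  show ?thesis using tendsto_diff[OF b xlnx_lim] by simp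
qed
lemma concave_nonneg:
  fixes f f' :: "real \<Rightarrow> real" and c x :: real
  assumes der: "\<And>t. 0 < t \<Longrightarrow> t \<le> c \<Longrightarrow> (f has_real_derivative f' t) (at t)"
    and mono: "\<And>s t. 0 < s \<Longrightarrow> s \<le> t \<Longrightarrow> t \<le> c \<Longrightarrow> f' t \<le> f' s"
    and lim: "(f \<longlongrightarrow> 0) (at_right 0)" and fc: "f c = 0" and x: "0 < x" "x \<le> c"
  shows "f x \<ge> 0"
proof (rule ccontr)
  assume neg: "\<not> f x \<ge> 0"
  have xc: "x < c"
  proof (rule ccontr)
    assume "\<not> x < c"
    hence "x = c" using x by simp
    thus False using fc neg by simp
  qed
  have "\<exists>z. x < z \<and> z < c \<and> f c - f x = (c - x) * f' z"
  proof (rule MVT2[OF xc])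
    fix t assume "x \<le> t" "t \<le> c"
    thus "(f has_real_derivative f' t) (at t)" using x by (intro der) auto
  qed
  then obtain z where z: "x < z" "z < c" "f c - f x = (c - x) * f' z" by blast
  have fz: "f' z > 0"
  proof (rule ccontr)
    assume "\<not> f' z > 0"
    hence "(c - x) * f' z \<le> 0" using xc by (simp add: mult_nonneg_nonpos)
    thus False using z(3) fc neg by linarith
  qed
  have pos: "f' t > 0" if "0 < t" "t \<le> x" for t
  proof -
    have "f' z \<le> f' t" by (rule mono) (use that z in auto)
    thus ?thesis using fz by linarith
  qed
  have fe: "f e \<le> f x" if e: "0 < e" "e < x" for e
  proof (rule DERIV_nonneg_imp_nondecreasing[of e x f])
    show "e \<le> x" using e by simp
    fix t assume t: "e \<le> t" "t \<le> x"
    have "(f has_real_derivative f' t) (at t)" by (rule der) (use t e x in auto)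
    moreover have "f' t > 0" by (rule pos) (use t e in auto)
    ultimately show "\<exists>y. (f has_real_derivative y) (at t) \<and> 0 \<le> y" by auto
  qed
  have ev: "eventually (\<lambda>e. f e \<le> f x) (at_right 0)"
    unfolding eventually_at_right_field using x fe by blast
  have "0 \<le> f x" by (rule tendsto_upperbound[OF lim ev]) simp
  thus False using neg by simp
qed


definition hh :: "real \<Rightarrow> real" where
  "hh t = - t * ln t - (1 - t) * ln (1 - t)"

lemma h_eq: "0 < t \<Longrightarrow> t < 1 \<Longrightarrow> h t = hh t"
  unfolding h_def hh_def by (auto simp: algebra_simps)

lemma xlnx_deriv: assumes "0 < t" shows "((\<lambda>t. t * ln t) has_real_derivative (ln t + 1)) (at t)"
  using DERIV_mult[OF DERIV_ident DERIV_ln[OF assms]] assms by simp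

lemma oxlnx_deriv: assumes "t < 1" shows "((\<lambda>t. (1 - t) * ln (1 - t)) has_real_derivative (- ln (1 - t) - 1)) (at t)"
proof -
  have c: "((\<lambda>u. u * ln u) has_real_derivative (ln (1 - t) + 1)) (at (1 - t))"
    using xlnx_deriv[of "1 - t"] assms by simp
  show ?thesis
    by (rule DERIV_cong[OF DERIV_chain2[OF c DERIV_diff[OF DERIV_const[of 1] DERIV_ident]]]) simp
qed

lemma hh_deriv: assumes "0 < t" "t < 1" shows "(hh has_real_derivative (ln (1 - t) - ln t)) (at t)"
proof -
  have "((\<lambda>t. - (t * ln t) - (1 - t) * ln (1 - t)) has_real_derivative
      (- (ln t + 1) - (- ln (1 - t) - 1))) (at t)"
    by (intro DERIV_diff DERIV_minus xlnx_deriv oxlnx_deriv assms)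
  moreover have "hh = (\<lambda>t. - (t * ln t) - (1 - t) * ln (1 - t))"
    unfolding hh_def by auto
  ultimately show ?thesis by simp
qed
lemma W_deriv: "((\<lambda>t::real. t * (1 - t)) has_real_derivative (1 - 2 * s)) (at s)"
  using DERIV_mult[OF DERIV_ident DERIV_diff[OF DERIV_const[of 1] DERIV_ident], of s]
  by (simp add: algebra_simps)

lemma hh_mono: assumes "0 < a" "a \<le> b" "b \<le> 1/2" shows "hh a \<le> hh b"
proof (rule DERIV_nonneg_imp_nondecreasing[OF assms(2)])
  fix x assume x: "a \<le> x" "x \<le> b"
  hence x0: "0 < x" "x \<le> 1/2" using assms by auto
  have "ln x \<le> ln (1 - x)" using x0 by simp
  thus "\<exists>y. DERIV hh x :> y \<and> 0 \<le> y"
    using x0 by (intro exI[of _ "ln (1 - x) - ln x"] conjI hh_deriv) auto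
qed

lemma d_deriv: assumes s: "0 < s" "s < 1"
  shows "((\<lambda>t. t^2 * ln t - (1-t)^2 * ln (1-t)) has_real_derivative 1 - 2 * hh s) (at s)"
proof -
  have "((\<lambda>t. t^2 * ln t - (1-t)^2 * ln (1-t)) has_real_derivative
     (2 * s * ln s + s^2 * (1/s)) - (2 * (1-s) * (-1) * ln (1-s) + (1-s)^2 * (-1 / (1-s)))) (at s)"
    using s by (intro derivative_eq_intros refl) auto
  moreover have "(2 * s * ln s + s^2 * (1/s)) - (2 * (1-s) * (-1) * ln (1-s) + (1-s)^2 * (-1 / (1-s))) = 1 - 2 * hh s"
    using s unfolding hh_def by (simp add: power2_eq_square field_simps)
  ultimately show ?thesis by simp
qed

lemma d_nonneg: assumes "0 < t" "t \<le> 1/2"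
  shows "(t::real)^2 * ln t - (1-t)^2 * ln (1-t) \<ge> 0"
proof (rule concave_nonneg[where f = "\<lambda>t. t^2 * ln t - (1-t)^2 * ln (1-t)"
        and f' = "\<lambda>t. 1 - 2 * hh t" and c = "1/2"])
  fix s :: real assume s: "0 < s" "s \<le> 1/2"
  show "((\<lambda>t. t^2 * ln t - (1-t)^2 * ln (1-t)) has_real_derivative 1 - 2 * hh s) (at s)"
    using s by (intro d_deriv) auto
next
  fix s u :: real assume "0 < s" "s \<le> u" "u \<le> 1/2"
  thus "1 - 2 * hh u \<le> 1 - 2 * hh s" using hh_mono[of s u] by simp
next
  show "((\<lambda>t::real. t^2 * ln t - (1-t)^2 * ln (1-t)) \<longlongrightarrow> 0) (at_right 0)" by (rule lim1)
qed (use assms in auto)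

lemma e_nonneg: assumes "0 < t" "t \<le> 1/2"
  shows "(1-(t::real)) * ln (1-t) - t * ln t \<ge> 0"
proof (rule concave_nonneg[where f = "\<lambda>t. (1-t) * ln (1-t) - t * ln t"
        and f' = "\<lambda>t. (- ln (1 - t) - 1) - (ln t + 1)" and c = "1/2"])
  fix s :: real assume s: "0 < s" "s \<le> 1/2"
  show "((\<lambda>t. (1-t) * ln (1-t) - t * ln t) has_real_derivative (- ln (1 - s) - 1) - (ln s + 1)) (at s)"
    using s by (intro DERIV_diff xlnx_deriv oxlnx_deriv) auto
next
  fix s u :: real assume su: "0 < s" "s \<le> u" "u \<le> 1/2"
  have "u * (1 - u) - s * (1 - s) = (u - s) * (1 - u - s)" by (simp add: algebra_simps)
  moreover have "0 \<le> (u - s) * (1 - u - s)" using su by (intro mult_nonneg_nonneg) auto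
  ultimately have "s * (1 - s) \<le> u * (1 - u)" by linarith
  hence "ln (s * (1 - s)) \<le> ln (u * (1 - u))" using su by (subst ln_le_cancel_iff) auto
  thus "(- ln (1 - u) - 1) - (ln u + 1) \<le> (- ln (1 - s) - 1) - (ln s + 1)" using su by (simp add: ln_mult)
next
  show "((\<lambda>t::real. (1-t) * ln (1-t) - t * ln t) \<longlongrightarrow> 0) (at_right 0)" by (rule lim2)
qed (use assms in auto)

lemma A_mono: assumes "0 < a" "a \<le> b" "b \<le> 1/2"
  shows "hh b / (b * (1 - b)) \<le> hh a / (a * (1 - a))"
proof (rule deriv_nonpos_imp_antimono[where g = "\<lambda>t. hh t / (t * (1 - t))" and g' = "\<lambda>s. ((ln (1 - s) - ln s) * (s * (1 - s)) - hh s * (1 - 2 * s)) / ((s * (1 - s)) * (s * (1 - s)))"])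
  fix x assume x: "x \<in> {a..b}"
  hence x0: "0 < x" "x < 1" "x \<le> 1/2" using assms by auto
  show "((\<lambda>t. hh t / (t * (1 - t))) has_real_derivative
     ((ln (1 - x) - ln x) * (x * (1 - x)) - hh x * (1 - 2 * x)) / ((x * (1 - x)) * (x * (1 - x)))) (at x)"
    by (rule DERIV_divide[OF hh_deriv W_deriv]) (use x0 in auto)
  have eq: "(ln (1 - x) - ln x) * (x * (1 - x)) - hh x * (1 - 2 * x) = - (x^2 * ln x - (1-x)^2 * ln (1-x))"
    unfolding hh_def by (simp add: algebra_simps power2_eq_square)
  show "((ln (1 - x) - ln x) * (x * (1 - x)) - hh x * (1 - 2 * x)) / ((x * (1 - x)) * (x * (1 - x))) \<le> 0"
    unfolding eq using d_nonneg[OF x0(1,3)] by (intro divide_nonpos_nonneg) auto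
qed (use assms in auto)

lemma hh_nonneg: assumes "0 < t" "t < 1" shows "0 \<le> hh t"
proof -
  have "ln t < 0" "ln (1 - t) < 0" using assms by auto
  have "t * ln t \<le> 0" by (rule mult_nonneg_nonpos) (use assms \<open>ln t < 0\<close> in auto)
  moreover have "(1 - t) * ln (1 - t) \<le> 0" by (rule mult_nonneg_nonpos) (use assms \<open>ln (1 - t) < 0\<close> in auto)
  ultimately show ?thesis unfolding hh_def by linarith
qed

lemma B_mono: assumes "0 < a" "a \<le> b" "b \<le> 1/2"
  shows "hh a ^ 2 / (a * (1 - a)) \<le> hh b ^ 2 / (b * (1 - b))"
proof -
  have "(\<lambda>t. hh t * hh t / (t * (1 - t))) a \<le> (\<lambda>t. hh t * hh t / (t * (1 - t))) b"
  proof (rule DERIV_nonneg_imp_nondecreasing[OF assms(2)])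
    fix x assume x: "a \<le> x" "x \<le> b"
    hence x0: "0 < x" "x < 1" "x \<le> 1/2" using assms by auto
    have D: "((\<lambda>t. hh t * hh t / (t * (1 - t))) has_real_derivative
       (((ln (1 - x) - ln x) * hh x + (ln (1 - x) - ln x) * hh x) * (x * (1 - x)) - hh x * hh x * (1 - 2 * x)) / ((x * (1 - x)) * (x * (1 - x)))) (at x)"
      by (rule DERIV_divide[OF DERIV_mult[OF hh_deriv hh_deriv] W_deriv]) (use x0 in auto)
    have eq: "((ln (1 - x) - ln x) * hh x + (ln (1 - x) - ln x) * hh x) * (x * (1 - x)) - hh x * hh x * (1 - 2 * x)
       = hh x * ((1-x) * ln (1-x) - x * ln x)"
      unfolding hh_def by (simp add: algebra_simps power2_eq_square)
    have "0 \<le> hh x * ((1-x) * ln (1-x) - x * ln x)"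
      using hh_nonneg[OF x0(1,2)] e_nonneg[OF x0(1,3)] by simp
    hence "0 \<le> (((ln (1 - x) - ln x) * hh x + (ln (1 - x) - ln x) * hh x) * (x * (1 - x)) - hh x * hh x * (1 - 2 * x)) / ((x * (1 - x)) * (x * (1 - x)))"
      unfolding eq by simp
    thus "\<exists>y. ((\<lambda>t. hh t * hh t / (t * (1 - t))) has_real_derivative y) (at x) \<and> 0 \<le> y"
      using D by blast
  qed
  thus ?thesis by (simp add: power2_eq_square)
qed
lemma hh_sym: "hh (1 - t) = hh t"
  unfolding hh_def by (simp add: algebra_simps)

definition M :: "real \<Rightarrow> real" where "M u = (1 - sqrt (1 - 4 * u)) / 2"

lemma M_props: assumes "0 < u" "u \<le> 1/4"
  shows "0 < M u" "M u \<le> 1/2" "M u * (1 - M u) = u"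
proof -
  have "sqrt (1 - 4 * u) < 1" using assms by simp
  thus "0 < M u" unfolding M_def by simp
  show "M u \<le> 1/2" unfolding M_def using assms by simp
  have "(sqrt (1 - 4 * u))^2 = 1 - 4 * u" using assms by simp
  thus "M u * (1 - M u) = u" unfolding M_def by (simp add: field_simps power2_eq_square)
qed

lemma M_mono: "u \<le> v \<Longrightarrow> v \<le> 1/4 \<Longrightarrow> M u \<le> M v"
  unfolding M_def by simp

lemma sub_add: assumes "0 < a" "0 < b" "a + b \<le> 1/4"
  shows "hh (M (a + b)) \<le> hh (M a) + hh (M b)"
proof -
  have r1: "hh (M (a+b)) / (a+b) \<le> hh (M a) / a"
    using A_mono[of "M a" "M (a+b)"] M_props[of a] M_props[of "a+b"] M_mono[of a "a+b"] assms by simp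
  have r2: "hh (M (a+b)) / (a+b) \<le> hh (M b) / b"
    using A_mono[of "M b" "M (a+b)"] M_props[of b] M_props[of "a+b"] M_mono[of b "a+b"] assms by simp
  have "hh (M (a + b)) = (a + b) * (hh (M (a+b)) / (a+b))"
    using assms by simp
  also have "\<dots> = a * (hh (M (a+b)) / (a+b)) + b * (hh (M (a+b)) / (a+b))"
    by (rule distrib_right)
  also have "\<dots> \<le> a * (hh (M a) / a) + b * (hh (M b) / b)"
    using r1 r2 assms by (intro add_mono mult_left_mono) auto
  also have "\<dots> = hh (M a) + hh (M b)" using assms by simp
  finally show ?thesis .
qed

lemma sq_bound: assumes "0 < y" "y = s^2 * q" "0 < s" "s \<le> 1" "0 < p" "p \<le> 1/2" "p * (1 - p) = q"
  shows "hh (M y) \<le> s * hh p"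
proof -
  have "1/4 - p * (1 - p) = (p - 1/2)^2" by (simp add: power2_eq_square algebra_simps)
  hence q4: "q \<le> 1/4" using assms(7) by (metis diff_ge_0_iff_ge zero_le_power2)
  have "0 < p * (1 - p)" using assms by (intro mult_pos_pos) auto
  hence q0: "0 < q" using assms(7) by simp
  have s2: "s^2 \<le> 1" using assms by (simp add: power_le_one)
  have yq: "y \<le> q" unfolding assms(2) using s2 q0 by (simp add: mult_left_le_one_le)
  have My: "0 < M y" "M y \<le> 1/2" "M y * (1 - M y) = y" using M_props[of y] assms yq q4 by auto
  have le: "M y \<le> p"
  proof (rule ccontr)
    assume "\<not> M y \<le> p"
    hence "0 < M y - p" "0 < 1 - M y - p" using My assms by auto
    hence "0 < (M y - p) * (1 - M y - p)" by simp
    moreover have "M y * (1 - M y) - p * (1 - p) = (M y - p) * (1 - M y - p)" by (simp add: algebra_simps)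
    ultimately have "p * (1 - p) < M y * (1 - M y)" by linarith
    thus False using My assms yq by simp
  qed
  have r: "hh (M y) ^ 2 / y \<le> hh p ^ 2 / q"
    using B_mono[OF My(1) le assms(6)] My assms by simp
  have "hh (M y) ^ 2 = (hh (M y) ^ 2 / y) * y" using assms(1) by simp
  also have "\<dots> \<le> (hh p ^ 2 / q) * y" using r assms by (intro mult_right_mono) auto
  also have "\<dots> = s^2 * hh p ^ 2" unfolding assms(2) using q0 by (simp add: field_simps)
  finally have "hh (M y) ^ 2 \<le> (s * hh p) ^ 2" by (simp add: power_mult_distrib)
  moreover have "0 \<le> s * hh p" using hh_nonneg[of p] assms by simp
  ultimately show ?thesis using power2_le_imp_le by blast
qed

theorem mainTheorem4:
  fixes \<alpha> \<beta> \<gamma> \<delta> :: real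
  assumes "\<alpha> \<ge> 0" "\<beta> \<ge> 0" "\<gamma> \<ge> 0" "\<delta> \<ge> 0"
    and "\<alpha> + \<beta> + \<gamma> + \<delta> = 1" and "\<beta> > 0" and "\<delta> > 0" and "\<alpha> + \<gamma> > 0"
  shows "let \<xi> = \<alpha> + \<beta>; D = 4 * \<beta> * \<delta> + (2 * \<xi> - 1)^2; \<mu> = (1 - sqrt D) / 2
         in h \<mu> \<ge> h \<xi> - (\<beta> + \<delta>) * h (\<beta> / (\<beta> + \<delta>))"
proof -
  define \<xi> where "\<xi> = \<alpha> + \<beta>"
  define s where "s = \<beta> + \<delta>"
  define p where "p = \<beta> / s"
  define x where "x = \<xi> * (1 - \<xi>)"
  define y where "y = \<beta> * \<delta>"
  define p' where "p' = min p (1 - p)"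
  have xi: "0 < \<xi>" "\<xi> < 1" using assms unfolding \<xi>_def by auto
  have s: "0 < s" "s \<le> 1" using assms unfolding s_def by auto
  have p: "0 < p" "p < 1" using assms s unfolding p_def s_def by (auto simp: field_simps)
  have e1: "1 - \<xi> = \<gamma> + \<delta>" using assms(5) unfolding \<xi>_def by linarith
  have xy: "x - y = \<alpha> * \<gamma> + \<alpha> * \<delta> + \<beta> * \<gamma>"
    unfolding x_def y_def e1 unfolding \<xi>_def by (simp add: algebra_simps)
  have xy0: "0 < x - y"
  proof (cases "\<alpha> > 0")
    case True
    have "0 < \<alpha> * \<delta>" using True assms by simp
    moreover have "0 \<le> \<alpha> * \<gamma>" "0 \<le> \<beta> * \<gamma>" using assms by auto
    ultimately show ?thesis using xy by linarith
  next
    case False hence "\<gamma> > 0" using assms by simp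
    hence "0 < \<beta> * \<gamma>" using assms by simp
    moreover have "0 \<le> \<alpha> * \<gamma>" "0 \<le> \<alpha> * \<delta>" using assms by auto
    ultimately show ?thesis using xy by linarith
  qed
  have y0: "0 < y" using assms unfolding y_def by simp
  have "1/4 - x = (\<xi> - 1/2)^2" unfolding x_def by (simp add: power2_eq_square algebra_simps)
  hence x4: "x \<le> 1/4" by (metis diff_ge_0_iff_ge zero_le_power2)
  have D: "4 * \<beta> * \<delta> + (2 * \<xi> - 1)^2 = 1 - 4 * (x - y)"
    unfolding x_def y_def by (simp add: algebra_simps power2_eq_square)
  have mu: "(1 - sqrt (4 * \<beta> * \<delta> + (2 * \<xi> - 1)^2)) / 2 = M (x - y)"
    unfolding D M_def ..
  have Mx: "M (x - y) \<le> 1/2" "0 < M (x - y)" using M_props[of "x - y"] xy0 x4 y0 by auto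
  have hmu: "h (M (x - y)) = hh (M (x - y))" using Mx by (intro h_eq) auto
  have hxi: "h \<xi> = hh (M x)"
  proof -
    have "sqrt (1 - 4 * x) = \<bar>2 * \<xi> - 1\<bar>"
    proof -
      have "1 - 4 * x = (2 * \<xi> - 1)^2" unfolding x_def by (simp add: power2_eq_square algebra_simps)
      thus ?thesis by simp
    qed
    hence "M x = \<xi> \<or> M x = 1 - \<xi>" unfolding M_def by (auto simp: abs_if)
    thus ?thesis using h_eq[OF xi] hh_sym by auto
  qed
  have hp: "h p = hh p'" using h_eq[OF p] hh_sym unfolding p'_def by (auto simp: min_def)
  have p': "0 < p'" "p' \<le> 1/2" "p' * (1 - p') = p * (1 - p)"
    using p unfolding p'_def by (auto simp: min_def algebra_simps)
  have sn: "s \<noteq> 0" using s by simp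
  have p1: "1 - p = \<delta> / s" unfolding p_def using sn unfolding s_def by (simp add: field_simps)
  have yq: "y = s^2 * (p * (1 - p))"
    unfolding p1 unfolding y_def p_def using sn by (simp add: field_simps power2_eq_square)
  have 1: "hh (M x) \<le> hh (M (x - y)) + hh (M y)"
    using sub_add[of "x - y" y] xy0 y0 x4 by simp
  have 2: "hh (M y) \<le> s * hh p'"
    using sq_bound[OF y0 yq s p'(1,2)] p'(3) by simp
  show ?thesis
    unfolding Let_def \<xi>_def[symmetric] mu s_def[symmetric] p_def[symmetric] hmu hxi hp
    using 1 2 by linarith
qed

end
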